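(* Let $0<\mu_2<\tfrac12<\mu_1<1$. For every $\epsilon\in(0,1)$ there exists a twice continuously differentiable function $f^{SD}_\epsilon:\mathbb{R}\to\mathbb{R}$, bounded below, with globally Lipschitz continuous derivative (indeed with second derivative bounded by a constant independent of $\epsilon$) and with values in a bounded interval independent of $\epsilon$, together with a sequence of steplengths $\mu_k\in[\tfrac14,1]$, such that the steepest-descent iterates $x_0=0$, $x_{k+1}=x_k-\mu_kg_k$ (with $g_k=(f^{SD}_\epsilon)'(x_k)$) satisfy the Goldstein conditions $$f(x_k)+\mu_1g_ks_k\le f(x_{k+1})\le f(x_k)+\mu_2g_ks_k,\qquad s_k=x_{k+1}-x_k,$$ for all $k$, and $|g_k|>\epsilon$ for $k<k_\epsilon$ while $|g_{k_\epsilon}|\le\epsilon$, where $k_\epsilon=\lceil\epsilon^{-2}\rceil$. *)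

theory Defs
  imports Complex_Main
begin

fun sd_iter :: "(real \<Rightarrow> real) \<Rightarrow> (nat \<Rightarrow> real) \<Rightarrow> nat \<Rightarrow> real" where
  "sd_iter g mu 0 = 0"
| "sd_iter g mu (Suc k) = sd_iter g mu k - mu k * g (sd_iter g mu k)"

end

theory Submission
  imports Defs
begin

lemma clamp_deriv:
  fixes F F' :: "real \<Rightarrow> real"
  assumes D: "\<And>x. (F has_real_derivative F' x) (at x)" and lh: "lo < hi"
    and z1: "F' lo = 0" and z2: "F' hi = 0"
  shows "((\<lambda>y. F (max lo (min hi y))) has_real_derivative F' (max lo (min hi x))) (at x)"
proof -
  let ?G = "\<lambda>y. F (max lo (min hi y))"
  consider "x < lo" | "x = lo" | "lo < x \<and> x < hi" | "x = hi" | "hi < x" by linarith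
  then show ?thesis
  proof cases
    case 1
    have ev: "eventually (\<lambda>y. ?G y = F lo) (nhds x)"
      using eventually_nhds_in_open[of "{..<lo}" x] 1 lh
      by (auto elim!: eventually_mono)
    have "((\<lambda>y. F lo) has_real_derivative 0) (at x)" by simp
    then show ?thesis using 1 lh z1
      by (subst DERIV_cong_ev[OF refl ev]) auto
  next
    case 5
    have ev: "eventually (\<lambda>y. ?G y = F hi) (nhds x)"
      using eventually_nhds_in_open[of "{hi<..}" x] 5 lh
      by (auto elim!: eventually_mono)
    have "((\<lambda>y. F hi) has_real_derivative 0) (at x)" by simp
    then show ?thesis using 5 lh z2
      by (subst DERIV_cong_ev[OF refl ev]) auto
  next
    case 3
    have ev: "eventually (\<lambda>y. ?G y = F y) (nhds x)"
      using eventually_nhds_in_open[of "{lo<..<hi}" x] 3 lh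
      by (auto elim!: eventually_mono)
    then show ?thesis using 3 D[of x]
      by (subst DERIV_cong_ev[OF refl ev]) auto
  next
    case 2
    have FL: "((\<lambda>h. (F (lo+h) - F lo)/h) \<longlongrightarrow> 0) (at 0)" using D[of lo] z1 by (simp add: DERIV_def)
    have "((\<lambda>h. (?G (lo+h) - ?G lo)/h) \<longlongrightarrow> 0) (at 0)"
      unfolding filterlim_at_split
    proof
      have "eventually (\<lambda>h::real. h \<in> {-1<..<0}) (at_left 0)" by (intro eventually_at_left_real) simp
      then have "eventually (\<lambda>h. (?G (lo+h) - ?G lo)/h = 0) (at_left 0)"
        using lh by (auto elim!: eventually_mono)
      then show "((\<lambda>h. (?G (lo+h) - ?G lo)/h) \<longlongrightarrow> 0) (at_left 0)"
        by (rule tendsto_eventually)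
    next
      have "eventually (\<lambda>h::real. h \<in> {0<..<hi-lo}) (at_right 0)"
        using lh by (intro eventually_at_right_real) simp
      then have ev: "eventually (\<lambda>h. (F (lo+h) - F lo)/h = (?G (lo+h) - ?G lo)/h) (at_right 0)"
        using lh by (auto elim!: eventually_mono)
      have "((\<lambda>h. (F (lo+h) - F lo)/h) \<longlongrightarrow> 0) (at_right 0)"
        using FL by (simp add: filterlim_at_split)
      then show "((\<lambda>h. (?G (lo+h) - ?G lo)/h) \<longlongrightarrow> 0) (at_right 0)"
        using ev by (rule Lim_transform_eventually)
    qed
    then show ?thesis using 2 lh z1 by (simp add: DERIV_def)
  next
    case 4
    have FL: "((\<lambda>h. (F (hi+h) - F hi)/h) \<longlongrightarrow> 0) (at 0)" using D[of hi] z2 by (simp add: DERIV_def)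
    have "((\<lambda>h. (?G (hi+h) - ?G hi)/h) \<longlongrightarrow> 0) (at 0)"
      unfolding filterlim_at_split
    proof
      have "eventually (\<lambda>h::real. h > 0) (at_right 0)" by (simp add: eventually_at_right_less)
      then have "eventually (\<lambda>h. (?G (hi+h) - ?G hi)/h = 0) (at_right 0)"
        using lh by (auto elim!: eventually_mono)
      then show "((\<lambda>h. (?G (hi+h) - ?G hi)/h) \<longlongrightarrow> 0) (at_right 0)"
        by (rule tendsto_eventually)
    next
      have "eventually (\<lambda>h::real. h \<in> {lo-hi<..<0}) (at_left 0)"
        using lh by (intro eventually_at_left_real) simp
      then have ev: "eventually (\<lambda>h. (F (hi+h) - F hi)/h = (?G (hi+h) - ?G hi)/h) (at_left 0)"
        using lh by (auto elim!: eventually_mono)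
      have "((\<lambda>h. (F (hi+h) - F hi)/h) \<longlongrightarrow> 0) (at_left 0)"
        using FL by (simp add: filterlim_at_split)
      then show "((\<lambda>h. (?G (hi+h) - ?G hi)/h) \<longlongrightarrow> 0) (at_left 0)"
        using ev by (rule Lim_transform_eventually)
    qed
    then show ?thesis using 4 lh z2 by (simp add: DERIV_def)
  qed
qed

lemma S_deriv:
  shows "((\<lambda>y::real. sin(c*y)) has_real_derivative (cos(c*x)*c)) (at x)"
  by (auto intro!: derivative_eq_intros)
lemma C_deriv:
  shows "((\<lambda>y::real. cos(c*y)) has_real_derivative (-sin(c*x)*c)) (at x)"
  by (auto intro!: derivative_eq_intros)
lemma F_deriv: "((\<lambda>y::real. -e*y - k*sin(c*y)) has_real_derivative (-e - k*(cos(c*x)*c))) (at x)"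
proof -
  have "((\<lambda>y::real. -e*y) has_real_derivative (-e)) (at x)"
    using DERIV_cmult[OF DERIV_ident, of "-e"] by simp
  then show ?thesis by (intro DERIV_diff DERIV_cmult S_deriv)
qed
lemma F1_deriv: "((\<lambda>y::real. -e*(1+cos(c*y))) has_real_derivative (-e*(-sin(c*x)*c))) (at x)"
proof -
  have "((\<lambda>y::real. 1+cos(c*y)) has_real_derivative (-sin(c*x)*c)) (at x)"
    using DERIV_add[OF DERIV_const C_deriv] by simp
  then show ?thesis by (intro DERIV_cmult)
qed
lemma cos2k: "cos (2*pi*real k) = 1"
  using cos_npi[of "2*k"] by (simp add: mult.commute mult.left_commute)
lemma sin2k: "sin (2*pi*real k) = 0"
  using sin_npi[of "2*k"] by (simp add: mult.commute mult.left_commute)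
lemma cos_half: assumes "N \<ge> (1::nat)" shows "cos (2*pi*(real N - 1/2)) = -1"
proof -
  have e: "2*pi*(real N - 1/2) = real (2*N - 1) * pi" using assms by (simp add: of_nat_diff field_simps)
  have "odd (2*N - 1)" using assms by simp
  then have "(-1::real)^(2*N-1) = -1" by simp
  then show ?thesis unfolding e cos_npi by simp
qed
lemma sin_half: assumes "N \<ge> (1::nat)" shows "sin (2*pi*(real N - 1/2)) = 0"
proof -
  have e: "2*pi*(real N - 1/2) = real (2*N - 1) * pi" using assms by (simp add: of_nat_diff field_simps)
  show ?thesis unfolding e sin_npi by simp
qed

theorem theoremA1:
  fixes \<mu>1 \<mu>2 :: real
  assumes "0 < \<mu>2" "\<mu>2 < 1/2" "1/2 < \<mu>1" "\<mu>1 < 1"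
  shows "\<exists>L a b :: real. \<forall>\<epsilon>::real. 0 < \<epsilon> \<and> \<epsilon> < 1 \<longrightarrow>
    (\<exists>(f::real \<Rightarrow> real) f' f'' (mu::nat \<Rightarrow> real).
       (\<forall>x. (f has_real_derivative f' x) (at x)) \<and>
       (\<forall>x. (f' has_real_derivative f'' x) (at x)) \<and>
       continuous_on UNIV f'' \<and>
       (\<exists>m. \<forall>x. m \<le> f x) \<and>
       (\<exists>M. \<forall>x y. \<bar>f' x - f' y\<bar> \<le> M * \<bar>x - y\<bar>) \<and>
       (\<forall>x. \<bar>f'' x\<bar> \<le> L) \<and>
       (\<forall>x. a \<le> f x \<and> f x \<le> b) \<and>
       (\<forall>k. 1/4 \<le> mu k \<and> mu k \<le> 1) \<and>
       (\<forall>k. let xk = sd_iter f' mu k; xk1 = sd_iter f' mu (Suc k);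
               gk = f' xk; sk = xk1 - xk in
             f xk + \<mu>1 * gk * sk \<le> f xk1 \<and> f xk1 \<le> f xk + \<mu>2 * gk * sk) \<and>
       (\<forall>k < nat \<lceil>1 / \<epsilon>\<^sup>2\<rceil>. \<bar>f' (sd_iter f' mu k)\<bar> > \<epsilon>) \<and>
       \<bar>f' (sd_iter f' mu (nat \<lceil>1 / \<epsilon>\<^sup>2\<rceil>))\<bar> \<le> \<epsilon>)"
proof (rule exI[of _ "2*pi"], rule exI[of _ "-3"], rule exI[of _ 3], intro allI impI)
  fix e :: real
  assume eps: "0 < e \<and> e < 1"
  then have e0: "0 < e" and e1: "e < 1" by auto
  define N where "N = nat \<lceil>1 / e\<^sup>2\<rceil>"
  have pos: "0 < 1 / e\<^sup>2" using e0 by simp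
  have RN: "real N = of_int \<lceil>1 / e\<^sup>2\<rceil>" unfolding N_def using pos by simp
  have Nlt: "real N < 1 / e\<^sup>2 + 1" unfolding RN using ceiling_correct[of "1/e^2"] by linarith
  have "0 < real N" unfolding RN using ceiling_correct[of "1/e^2"] pos by linarith
  then have N1: "N \<ge> 1" by simp
  define c where "c = 2*pi/e"
  define kk where "kk = e^2/(2*pi)"
  have ce: "c * e = 2*pi" using e0 by (simp add: c_def)
  have kkc: "kk * c = e" using e0 by (simp add: c_def kk_def power2_eq_square)
  define lo where "lo = -e/2"
  define hi where "hi = (real N - 1/2)*e"
  have lohi: "lo < hi" using e0 N1 by (simp add: lo_def hi_def field_simps)
  define F where "F = (\<lambda>y::real. -e*y - kk*sin(c*y))"
  define F1 where "F1 = (\<lambda>y::real. -e*(1+cos(c*y)))"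
  define F2 where "F2 = (\<lambda>y::real. -e*(-sin(c*y)*c))"
  have dF: "\<And>x. (F has_real_derivative F1 x) (at x)"
  proof -
    fix x
    show "(F has_real_derivative F1 x) (at x)"
      unfolding F_def F1_def
      by (rule DERIV_cong[OF F_deriv]) (simp add: algebra_simps kkc[symmetric])
  qed
  have dF1: "\<And>x. (F1 has_real_derivative F2 x) (at x)"
    unfolding F1_def F2_def by (rule F1_deriv)
  have clo: "c * lo = - pi" using ce unfolding lo_def by (simp add: algebra_simps)
  have chi: "c * hi = 2*pi*(real N - 1/2)" using ce unfolding hi_def by (simp add: algebra_simps)
  have cke: "\<And>k. c * (real k * e) = 2*pi*real k" using ce by (simp add: algebra_simps)
  have F1lo: "F1 lo = 0" unfolding F1_def clo by simp
  have F1hi: "F1 hi = 0" unfolding F1_def chi using cos_half[OF N1] by simp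
  have F2lo: "F2 lo = 0" unfolding F2_def clo by simp
  have F2hi: "F2 hi = 0" unfolding F2_def chi using sin_half[OF N1] by simp
  define cl where "cl = (\<lambda>y::real. max lo (min hi y))"
  define f where "f = (\<lambda>y. F (cl y))"
  define f1 where "f1 = (\<lambda>y. F1 (cl y))"
  define f2 where "f2 = (\<lambda>y. F2 (cl y))"
  define mu where "mu = (\<lambda>k::nat. if k = N - 1 then 1/4 else (1/2::real))"
  have df: "\<forall>x. (f has_real_derivative f1 x) (at x)"
    unfolding f_def f1_def cl_def using clamp_deriv[OF dF lohi F1lo F1hi] by blast
  have df1: "\<forall>x. (f1 has_real_derivative f2 x) (at x)"
    unfolding f1_def f2_def cl_def using clamp_deriv[OF dF1 lohi F2lo F2hi] by blast
  have cont: "continuous_on UNIV f2"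
    unfolding f2_def F2_def cl_def by (intro continuous_intros)
  have f2b: "\<forall>x. \<bar>f2 x\<bar> \<le> 2*pi"
  proof
    fix x
    have "\<bar>sin (c * cl x)\<bar> \<le> 1" by (rule abs_sin_le_one)
    then have "e * c * \<bar>sin (c * cl x)\<bar> \<le> e * c" using e0 c_def by (simp add: mult_left_le)
    then show "\<bar>f2 x\<bar> \<le> 2*pi" unfolding f2_def F2_def using e0 ce
      by (simp add: abs_mult c_def algebra_simps)
  qed
  have Fb: "\<forall>x. -3 \<le> f x \<and> f x \<le> 3"
  proof
    fix x
    have r: "lo \<le> cl x" "cl x \<le> hi" unfolding cl_def using lohi by auto
    have eN: "e \<le> real N * e" using N1 e0 by simp
    have r2: "-e/2 \<le> cl x" "cl x \<le> real N*e - e/2" using r by (simp_all add: lo_def hi_def algebra_simps)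
    have "\<bar>cl x\<bar> \<le> real N * e" unfolding abs_le_iff using r2 eN e0 by linarith
    then have "e * \<bar>cl x\<bar> \<le> real N * e^2" using e0
      by (metis mult_left_mono less_imp_le mult.left_commute power2_eq_square)
    also have "\<dots> < (1/e^2 + 1) * e^2" using Nlt e0 by (intro mult_strict_right_mono) auto
    also have "\<dots> = 1 + e^2" using e0 by (simp add: field_simps)
    also have "\<dots> \<le> 2" using e0 e1 by (simp add: power_le_one)
    finally have A: "\<bar>e * cl x\<bar> \<le> 2" using e0 by (simp add: abs_mult)
    have kk0: "0 \<le> kk" unfolding kk_def by simp
    have "kk * \<bar>sin (c * cl x)\<bar> \<le> kk" by (rule mult_left_le[OF abs_sin_le_one kk0])
    then have "\<bar>kk * sin (c * cl x)\<bar> \<le> kk" using kk0 by (simp add: abs_mult)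
    moreover have "kk \<le> 1"
    proof -
      have "e^2 \<le> 1" using e0 e1 by (simp add: power_le_one)
      moreover have "1 \<le> 2*pi" using pi_ge_two by linarith
      ultimately show ?thesis unfolding kk_def using pi_gt_zero by (simp add: divide_le_eq)
    qed
    ultimately have "\<bar>kk * sin (c * cl x)\<bar> \<le> 1" by linarith
    then show "-3 \<le> f x \<and> f x \<le> 3" using A unfolding f_def F_def by (simp add: abs_le_iff)
  qed
  have lip: "\<forall>x y. \<bar>f1 x - f1 y\<bar> \<le> 2*pi * \<bar>x - y\<bar>"
  proof (intro allI)
    fix x y :: real
    have key: "\<bar>f1 b - f1 a\<bar> \<le> 2*pi * (b - a)" if ab: "a < b" for a b
    proof -
      obtain z where "f1 b - f1 a = (b - a) * f2 z"
        using MVT2[OF ab, of f1 f2] df1 by blast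
      then show ?thesis using f2b[rule_format, of z] ab by (simp add: abs_mult mult.commute mult_left_mono)
    qed
    consider "x < y" | "x = y" | "y < x" by linarith
    then show "\<bar>f1 x - f1 y\<bar> \<le> 2*pi * \<bar>x - y\<bar>"
      by cases (use key[of x y] key[of y x] in \<open>auto simp: abs_minus_commute\<close>)
  qed
  have f1k: "f1 (real k * e) = -2*e" if "k < N" for k
  proof -
    have a1: "0 \<le> real k * e" using e0 by simp
    have "real k \<le> real N - 1/2" using that by linarith
    then have a2: "real k * e \<le> hi" unfolding hi_def using e0 by (simp add: mult_right_mono)
    have a3: "lo \<le> real k * e" unfolding lo_def using a1 e0 by linarith
    have "cl (real k * e) = real k * e" unfolding cl_def using a3 a2 by simp
    moreover have "F1 (real k * e) = -2*e" unfolding F1_def cke cos2k by simp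
    ultimately show ?thesis unfolding f1_def by simp
  qed
  have f1hi: "f1 hi = 0" unfolding f1_def cl_def using lohi F1hi by simp
  have iter: "sd_iter f1 mu k = (if k < N then real k * e else hi)" for k
  proof (induction k)
    case 0
    then show ?case using N1 by simp
  next
    case (Suc k)
    show ?case
    proof (cases "Suc k < N")
      case True
      then have "mu k = 1/2" unfolding mu_def by auto
      then show ?thesis using Suc True f1k[of k] by (simp add: algebra_simps)
    next
      case False
      show ?thesis
      proof (cases "k < N")
        case True
        then have kN: "k = N - 1" using False by simp
        then have "mu k = 1/4" unfolding mu_def by simp
        moreover have rk: "real k = real N - 1" using kN N1 by simp
        ultimately have "sd_iter f1 mu (Suc k) = real k * e + e/2"
          using Suc True f1k[of k] by simp
        also have "\<dots> = hi" unfolding hi_def rk by (simp add: algebra_simps)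
        finally show ?thesis using False by simp
      next
        case False
        then show ?thesis using Suc f1hi by simp
      qed
    qed
  qed
  have fk: "f (real k * e) = - real k * e^2" if "k < N" for k
  proof -
    have a1: "0 \<le> real k * e" using e0 by simp
    have "real k \<le> real N - 1/2" using that by linarith
    then have a2: "real k * e \<le> hi" unfolding hi_def using e0 by (simp add: mult_right_mono)
    have a3: "lo \<le> real k * e" unfolding lo_def using a1 e0 by linarith
    have "cl (real k * e) = real k * e" unfolding cl_def using a3 a2 by simp
    moreover have "F (real k * e) = - real k * e^2" unfolding F_def cke sin2k
      by (simp add: power2_eq_square)
    ultimately show ?thesis unfolding f_def by simp
  qed
  have fhi: "f hi = - (real N - 1/2) * e^2"
  proof -
    have "cl hi = hi" unfolding cl_def using lohi by simp
    moreover have "F hi = - (real N - 1/2) * e^2" unfolding F_def chi sin_half[OF N1]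
      by (simp add: hi_def power2_eq_square algebra_simps)
    ultimately show ?thesis unfolding f_def by simp
  qed
  define E where "E = e^2"
  have E0: "0 < E" unfolding E_def using e0 by simp
  have m1: "E/2 \<le> \<mu>1 * E" using assms E0 by simp
  have m2: "\<mu>2 * E \<le> E/2" using assms E0 by simp
  have gold: "f (sd_iter f1 mu k) + \<mu>1 * f1 (sd_iter f1 mu k) * (sd_iter f1 mu (Suc k) - sd_iter f1 mu k) \<le> f (sd_iter f1 mu (Suc k)) \<and>
     f (sd_iter f1 mu (Suc k)) \<le> f (sd_iter f1 mu k) + \<mu>2 * f1 (sd_iter f1 mu k) * (sd_iter f1 mu (Suc k) - sd_iter f1 mu k)" for k
  proof (cases "Suc k < N")
    case True
    then have k: "k < N" by simp
    have X: "sd_iter f1 mu k = real k * e" "sd_iter f1 mu (Suc k) = real (Suc k) * e"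
      using iter[of k] iter[of "Suc k"] True k by auto
    have A: "f (real k * e) = - real k * E" using fk[OF k] E_def by simp
    have B: "f (real (Suc k) * e) = - real k * E - E" using fk[OF True] E_def by (simp add: algebra_simps)
    have s1: "real (Suc k) * e - real k * e = e" by (simp add: algebra_simps)
    have C: "\<mu>1 * f1 (real k * e) * (real (Suc k) * e - real k * e) = - 2 * (\<mu>1 * E)"
      unfolding s1 f1k[OF k] E_def by (simp add: algebra_simps power2_eq_square)
    have D: "\<mu>2 * f1 (real k * e) * (real (Suc k) * e - real k * e) = - 2 * (\<mu>2 * E)"
      unfolding s1 f1k[OF k] E_def by (simp add: algebra_simps power2_eq_square)
    show ?thesis unfolding X using A B C D m1 m2 by linarith
  next
    case False
    show ?thesis
    proof (cases "k < N")
      case k: True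
      then have kN: "k = N - 1" using False by simp
      have rk: "real k = real N - 1" using kN N1 by simp
      have X: "sd_iter f1 mu k = real k * e" "sd_iter f1 mu (Suc k) = hi"
        using iter[of k] iter[of "Suc k"] False k by auto
      have A: "f (real k * e) = - real k * E" using fk[OF k] E_def by simp
      have B: "f hi = - real k * E - E/2" unfolding fhi E_def rk by (simp add: algebra_simps)
      have s1: "hi - real k * e = e/2" unfolding hi_def rk by (simp add: algebra_simps)
      have C: "\<mu>1 * f1 (real k * e) * (hi - real k * e) = - (\<mu>1 * E)"
        unfolding s1 f1k[OF k] E_def by (simp add: algebra_simps power2_eq_square)
      have D: "\<mu>2 * f1 (real k * e) * (hi - real k * e) = - (\<mu>2 * E)"
        unfolding s1 f1k[OF k] E_def by (simp add: algebra_simps power2_eq_square)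
      show ?thesis unfolding X using A B C D m1 m2 by linarith
    next
      case nk: False
      then show ?thesis using iter[of k] iter[of "Suc k"] f1hi by simp
    qed
  qed
  have grad: "\<forall>k < N. \<bar>f1 (sd_iter f1 mu k)\<bar> > e"
    using iter f1k e0 by simp
  have gradN: "\<bar>f1 (sd_iter f1 mu N)\<bar> \<le> e"
    using iter[of N] f1hi e0 by simp
  have mub: "\<forall>k. 1/4 \<le> mu k \<and> mu k \<le> 1" unfolding mu_def by simp
  show "\<exists>f f' f'' mu.
       (\<forall>x. (f has_real_derivative f' x) (at x)) \<and>
       (\<forall>x. (f' has_real_derivative f'' x) (at x)) \<and>
       continuous_on UNIV f'' \<and>
       (\<exists>m. \<forall>x. m \<le> f x) \<and>
       (\<exists>M. \<forall>x y. \<bar>f' x - f' y\<bar> \<le> M * \<bar>x - y\<bar>) \<and>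
       (\<forall>x. \<bar>f'' x\<bar> \<le> 2*pi) \<and>
       (\<forall>x. -3 \<le> f x \<and> f x \<le> 3) \<and>
       (\<forall>k. 1/4 \<le> mu k \<and> mu k \<le> 1) \<and>
       (\<forall>k. let xk = sd_iter f' mu k; xk1 = sd_iter f' mu (Suc k);
               gk = f' xk; sk = xk1 - xk in
             f xk + \<mu>1 * gk * sk \<le> f xk1 \<and> f xk1 \<le> f xk + \<mu>2 * gk * sk) \<and>
       (\<forall>k < nat \<lceil>1 / e\<^sup>2\<rceil>. \<bar>f' (sd_iter f' mu k)\<bar> > e) \<and>
       \<bar>f' (sd_iter f' mu (nat \<lceil>1 / e\<^sup>2\<rceil>))\<bar> \<le> e"
    apply (rule exI[of _ f], rule exI[of _ f1], rule exI[of _ f2], rule exI[of _ mu])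
    apply (intro conjI)
    subgoal by (rule df)
    subgoal by (rule df1)
    subgoal by (rule cont)
    subgoal using Fb by blast
    subgoal using lip by blast
    subgoal by (rule f2b)
    subgoal by (rule Fb)
    subgoal by (rule mub)
    subgoal unfolding Let_def using gold by blast
    subgoal using grad unfolding N_def by blast
    subgoal using gradN unfolding N_def by blast
    done
qed

end
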